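(* Suppose $d^{(1)}_{15}<0$, $d^{(1)}_{24}<0$ and $d^{(4)}_{12}<0$. Then every section $\mathcal{A}\in H^0(\bigwedge^2\mathcal{F}\otimes\mathcal{E}\otimes\det\mathcal{E}^\vee)$ is singular above every point $p\in\mathbb{P}^1$ at which $a^{(1)}_{25}$ vanishes. (Consequently, if $C_{\mathcal{A}}$ is a smooth curve then $d^{(1)}_{25}=0$.)
   Context: Work over $\mathbb{C}$. Fix $g\ge0$, $N=g+4$, $\mathcal{E}\cong\bigoplus_{k=1}^4\mathcal{O}_{\mathbb{P}^1}(e_k)$ with $e_1\le\dots\le e_4$, $\sum e_k=N$, and $\mathcal{F}\cong\bigoplus_{i=1}^5\mathcal{O}(f_i)$ with $f_1\le\dots\le f_5$, $\sum f_i=2N$, splittings fixed; $d^{(k)}_{ij}=f_i+f_j+e_k-N$. A section $\mathcal{A}\in H^0(\bigwedge^2\mathcal{F}\otimes\mathcal{E}\otimes\det\mathcal{E}^\vee)$ is a quadruple $(A_1,\dots,A_4)$ of $5\times5$ alternating matrices whose $(i,j)$ entry $a^{(k)}_{ij}$ of $A_k$ is a homogeneous form in $\mathbb{C}[s,t]$ of degree $d^{(k)}_{ij}$ (zero if negative). $C_{\mathcal{A}}\subset\mathbb{P}(\mathcal{E})$ is the subscheme cut out by the five $4\times4$ principal sub-Pfaffians of $\mathcal{A}(\mathbf{x})=\sum_kA_kx_k$ ($x_1,\dots,x_4$ fiber coordinates). $\mathcal{A}$ is singular above $p$ if some point of $C_{\mathcal{A}}$ over $p$ has Zariski tangent space of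 dimension $\ne1$. *)

theory Defs
  imports Complex_Main "Jordan_Normal_Form.Matrix_Kernel"
begin

definition bform :: "(nat \<Rightarrow> complex) \<Rightarrow> int \<Rightarrow> complex \<Rightarrow> complex \<Rightarrow> complex" where
  "bform c d s t = (if d < 0 then 0 else (\<Sum>i\<le>nat d. c i * s ^ i * t ^ (nat d - i)))"

definition dd :: "(nat \<Rightarrow> int) \<Rightarrow> (nat \<Rightarrow> int) \<Rightarrow> int \<Rightarrow> nat \<Rightarrow> nat \<Rightarrow> nat \<Rightarrow> int" where
  "dd e f N k i j = f i + f j + e k - N"

(* A section A = (A_1,...,A_4) is given by coefficient data c k i j (indices k in 1..4,
   i,j in 1..5); entry a^(k)_ij = bform (c k i j) (d^(k)_ij).  The matrices must be
   alternating. *)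
definition alternating_data :: "(nat \<Rightarrow> nat \<Rightarrow> nat \<Rightarrow> nat \<Rightarrow> complex) \<Rightarrow> bool" where
  "alternating_data c \<longleftrightarrow>
     (\<forall>k\<in>{1..4}. \<forall>i\<in>{1..5}. \<forall>j\<in>{1..5}. \<forall>n.
        c k i i n = 0 \<and> c k j i n = - c k i j n)"

definition entry :: "(nat \<Rightarrow> int) \<Rightarrow> (nat \<Rightarrow> int) \<Rightarrow> int \<Rightarrow> (nat \<Rightarrow> nat \<Rightarrow> nat \<Rightarrow> nat \<Rightarrow> complex)
     \<Rightarrow> nat \<Rightarrow> nat \<Rightarrow> nat \<Rightarrow> complex \<Rightarrow> complex \<Rightarrow> complex" where
  "entry e f N c k i j s t = bform (c k i j) (dd e f N k i j) s t"

(* Points of the ambient space are z : nat => complex with z 0 = s, z 1 = t (base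
   coordinates) and z (k+1) = x_k, k = 1..4 (fiber coordinates). *)
definition Amat :: "(nat \<Rightarrow> int) \<Rightarrow> (nat \<Rightarrow> int) \<Rightarrow> int \<Rightarrow> (nat \<Rightarrow> nat \<Rightarrow> nat \<Rightarrow> nat \<Rightarrow> complex)
     \<Rightarrow> (nat \<Rightarrow> complex) \<Rightarrow> nat \<Rightarrow> nat \<Rightarrow> complex" where
  "Amat e f N c z i j = (\<Sum>k\<in>{1..4}. entry e f N c k i j (z 0) (z 1) * z (k + 1))"

definition pfaff4 :: "(nat \<Rightarrow> nat \<Rightarrow> complex) \<Rightarrow> nat \<Rightarrow> complex" where
  "pfaff4 M m = (let r = filter (\<lambda>i. i \<noteq> m) [1,2,3,4,5];
                     i = r ! 0; j = r ! 1; k = r ! 2; l = r ! 3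
                 in M i j * M k l - M i k * M j l + M i l * M j k)"

definition Pf :: "(nat \<Rightarrow> int) \<Rightarrow> (nat \<Rightarrow> int) \<Rightarrow> int \<Rightarrow> (nat \<Rightarrow> nat \<Rightarrow> nat \<Rightarrow> nat \<Rightarrow> complex)
     \<Rightarrow> nat \<Rightarrow> (nat \<Rightarrow> complex) \<Rightarrow> complex" where
  "Pf e f N c m z = pfaff4 (Amat e f N c z) m"

definition pderiv_at :: "((nat \<Rightarrow> complex) \<Rightarrow> complex) \<Rightarrow> nat \<Rightarrow> (nat \<Rightarrow> complex) \<Rightarrow> complex" where
  "pderiv_at F q z = (SOME D. ((\<lambda>w. F (z(q := w))) has_field_derivative D) (at (z q)))"

definition jacobian :: "(nat \<Rightarrow> int) \<Rightarrow> (nat \<Rightarrow> int) \<Rightarrow> int \<Rightarrow> (nat \<Rightarrow> nat \<Rightarrow> nat \<Rightarrow> nat \<Rightarrow> complex)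
     \<Rightarrow> (nat \<Rightarrow> complex) \<Rightarrow> complex mat" where
  "jacobian e f N c z = mat 5 6 (\<lambda>(r, q). pderiv_at (Pf e f N c (r + 1)) q z)"

definition on_curve_over :: "(nat \<Rightarrow> int) \<Rightarrow> (nat \<Rightarrow> int) \<Rightarrow> int \<Rightarrow> (nat \<Rightarrow> nat \<Rightarrow> nat \<Rightarrow> nat \<Rightarrow> complex)
     \<Rightarrow> complex \<Rightarrow> complex \<Rightarrow> (nat \<Rightarrow> complex) \<Rightarrow> bool" where
  "on_curve_over e f N c s0 t0 z \<longleftrightarrow>
     z 0 = s0 \<and> z 1 = t0 \<and> (\<exists>k\<in>{1..4}. z (k + 1) \<noteq> 0) \<and>
     (\<forall>m\<in>{1..5}. Pf e f N c m z = 0)"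

(* P(E) is the quotient of {(s,t) <> 0, x <> 0} in C^6 by the free action of a
   2-dimensional torus; the Zariski tangent space of C_A at the image of z is the
   kernel of the Jacobian modulo the 2-dimensional span of the torus orbit directions. *)
definition tangent_dim :: "(nat \<Rightarrow> int) \<Rightarrow> (nat \<Rightarrow> int) \<Rightarrow> int \<Rightarrow> (nat \<Rightarrow> nat \<Rightarrow> nat \<Rightarrow> nat \<Rightarrow> complex)
     \<Rightarrow> (nat \<Rightarrow> complex) \<Rightarrow> int" where
  "tangent_dim e f N c z = int (kernel_dim (jacobian e f N c z)) - 2"

definition singular_above :: "(nat \<Rightarrow> int) \<Rightarrow> (nat \<Rightarrow> int) \<Rightarrow> int \<Rightarrow> (nat \<Rightarrow> nat \<Rightarrow> nat \<Rightarrow> nat \<Rightarrow> complex)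
     \<Rightarrow> complex \<Rightarrow> complex \<Rightarrow> bool" where
  "singular_above e f N c s0 t0 \<longleftrightarrow>
     (\<exists>z. on_curve_over e f N c s0 t0 z \<and> tangent_dim e f N c z \<noteq> 1)"

end

theory Submission
  imports Defs
begin

definition dif :: "(complex \<Rightarrow> complex) \<Rightarrow> complex \<Rightarrow> bool" where
  "dif g x \<longleftrightarrow> (\<exists>D. (g has_field_derivative D) (at x))"

lemma dif_const: "dif (\<lambda>w. a) x"
  unfolding dif_def by (rule exI, rule DERIV_const)

lemma dif_add: "dif g x \<Longrightarrow> dif h x \<Longrightarrow> dif (\<lambda>w. g w + h w) x"
  unfolding dif_def by (metis DERIV_add)

lemma dif_diff: "dif g x \<Longrightarrow> dif h x \<Longrightarrow> dif (\<lambda>w. g w - h w) x"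
  unfolding dif_def by (metis DERIV_diff)

lemma dif_mult: "dif g x \<Longrightarrow> dif h x \<Longrightarrow> dif (\<lambda>w. g w * h w) x"
  unfolding dif_def by (metis DERIV_mult)

lemma dif_pow: "dif g x \<Longrightarrow> dif (\<lambda>w. g w ^ n) x"
  unfolding dif_def by (metis DERIV_power)

lemma dif_sum: "(\<And>n. n \<in> S \<Longrightarrow> dif (\<lambda>w. g w n) x) \<Longrightarrow> dif (\<lambda>w. \<Sum>n\<in>S. g w n) x"
proof -
  assume h: "\<And>n. n \<in> S \<Longrightarrow> dif (\<lambda>w. g w n) x"
  then have "\<forall>n\<in>S. \<exists>D. ((\<lambda>w. g w n) has_field_derivative D) (at x)" unfolding dif_def by blast
  then obtain D where "\<forall>n\<in>S. ((\<lambda>w. g w n) has_field_derivative D n) (at x)" by metis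
  then have "((\<lambda>w. \<Sum>n\<in>S. g w n) has_field_derivative sum D S) (at x)"
    by (intro DERIV_sum) auto
  then show ?thesis unfolding dif_def by blast
qed

lemma dif_coord: "dif (\<lambda>w. (z(q:=w)) n) x"
proof (cases "n = q")
  case True
  then show ?thesis unfolding dif_def by (auto intro!: exI DERIV_ident)
next
  case False
  then show ?thesis by (simp add: dif_const)
qed

lemma dif_bform: "dif (\<lambda>w. bform cc d ((z(q:=w)) 0) ((z(q:=w)) 1)) x"
  unfolding bform_def
proof (cases "d < 0")
  case True then show "dif (\<lambda>w. if d < 0 then 0 else \<Sum>i\<le>nat d. cc i * (z(q := w)) 0 ^ i * (z(q := w)) 1 ^ (nat d - i)) x"
    by (simp add: dif_const)
next
  case False then show "dif (\<lambda>w. if d < 0 then 0 else \<Sum>i\<le>nat d. cc i * (z(q := w)) 0 ^ i * (z(q := w)) 1 ^ (nat d - i)) x"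
    by (simp only: if_False, intro dif_sum dif_mult dif_pow dif_const dif_coord)
qed

lemma dif_Amat: "dif (\<lambda>w. Amat e f N c (z(q:=w)) i j) x"
  unfolding Amat_def entry_def
  by (intro dif_sum dif_mult dif_bform dif_coord)

lemma deriv_vanish:
  assumes "dif g x" "dif h x" "g x = 0" "h x = 0"
  shows "((\<lambda>w. g w * h w) has_field_derivative 0) (at x)"
proof -
  obtain D E where "(g has_field_derivative D) (at x)" "(h has_field_derivative E) (at x)"
    using assms unfolding dif_def by blast
  from DERIV_mult[OF this] show ?thesis using assms by simp
qed

lemma pderiv_eq: "((\<lambda>w. F (z(q := w))) has_field_derivative D) (at (z q)) \<Longrightarrow> pderiv_at F q z = D"
  unfolding pderiv_at_def by (rule some_equality) (auto intro: DERIV_unique)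

lemma kernel_dim_cong: "mat_kernel A = mat_kernel B \<Longrightarrow> dim_col A = dim_col B \<Longrightarrow> kernel_dim A = kernel_dim B"
  unfolding kernel_dim_def by simp

lemma kernel_dim_ge:
  fixes A :: "'a :: field mat"
  assumes A: "A \<in> carrier_mat nr nc"
  shows "kernel_dim A \<ge> nc - nr"
proof -
  obtain C where gj: "gauss_jordan_single A = C" by auto
  note g = gauss_jordan_single[OF A gj]
  from g(3) obtain fp where pf: "pivot_fun C fp nc" unfolding row_echelon_form_def using g(2) by auto
  have "length (pivot_positions C) = card {i. i < nr \<and> row C i \<noteq> 0\<^sub>v nc}"
    by (rule pivot_positions(4)[OF g(2) pf])
  also have "\<dots> \<le> card {..<nr}" by (rule card_mono) auto
  finally have "length (pivot_positions C) \<le> nr" by simp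
  then show ?thesis unfolding kernel_dim_code gj using A by simp
qed

lemma kernel_dim_zero_rows:
  fixes A :: "'a :: field mat"
  assumes A: "A \<in> carrier_mat nr nc" and k: "k \<le> nr"
    and z: "\<And>i j. k \<le> i \<Longrightarrow> i < nr \<Longrightarrow> j < nc \<Longrightarrow> A $$ (i, j) = 0"
  shows "kernel_dim A \<ge> nc - k"
proof -
  define B where "B = mat k nc (\<lambda>(i,j). A $$ (i,j))"
  have B: "B \<in> carrier_mat k nc" unfolding B_def by simp
  have rowz: "row A i = 0\<^sub>v nc" if "k \<le> i" "i < nr" for i
    using A z that by (auto simp: vec_eq_iff)
  have rowB: "row B i = row A i" if "i < k" for i
    using A that k unfolding B_def by (auto simp: vec_eq_iff)
  have "mat_kernel A = mat_kernel B"
  proof (rule subset_antisym; rule subsetI)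
    fix v assume v: "v \<in> mat_kernel A"
    then have vc: "v \<in> carrier_vec nc" and "A *\<^sub>v v = 0\<^sub>v nr" using A unfolding mat_kernel_def by auto
    then have "\<forall>i<nr. row A i \<bullet> v = 0" using A by (auto simp: vec_eq_iff)
    then have "B *\<^sub>v v = 0\<^sub>v k"
    proof (intro eq_vecI)
      fix i assume "i < dim_vec (0\<^sub>v k :: 'a vec)"
      then have i: "i < k" by simp
      then show "(B *\<^sub>v v) $ i = 0\<^sub>v k $ i" using B rowB[OF i] k \<open>\<forall>i<nr. row A i \<bullet> v = 0\<close> by simp
    qed (use B in simp)
    then show "v \<in> mat_kernel B" using vc B unfolding mat_kernel_def by auto
  next
    fix v assume v: "v \<in> mat_kernel B"
    then have vc: "v \<in> carrier_vec nc" and "B *\<^sub>v v = 0\<^sub>v k" using B unfolding mat_kernel_def by auto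
    then have h: "\<forall>i<k. row A i \<bullet> v = 0"
    proof (intro allI impI)
      fix i assume i: "i < k"
      have "(B *\<^sub>v v) $ i = 0" using \<open>B *\<^sub>v v = 0\<^sub>v k\<close> i by simp
      then show "row A i \<bullet> v = 0" using B rowB[OF i] i by simp
    qed
    have "\<forall>i<nr. row A i \<bullet> v = 0"
    proof (intro allI impI)
      fix i assume "i < nr"
      show "row A i \<bullet> v = 0"
      proof (cases "i < k")
        case True then show ?thesis using h by auto
      next
        case False then show ?thesis using rowz[of i] \<open>i < nr\<close> vc by simp
      qed
    qed
    then have "A *\<^sub>v v = 0\<^sub>v nr" using A by (auto simp: vec_eq_iff)
    then show "v \<in> mat_kernel A" using vc A unfolding mat_kernel_def by auto
  qed
  then have "kernel_dim A = kernel_dim B" using A B by (intro kernel_dim_cong) auto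
  then show ?thesis using kernel_dim_ge[OF B] by simp
qed

lemma entry_neg: "dd e f N k i j < 0 \<Longrightarrow> entry e f N c k i j s t = 0"
  unfolding entry_def bform_def by simp

lemma four_set: "{1..4::nat} = {1,2,3,4}" by auto

lemma Amat_expand: "Amat e f N c z i j =
   entry e f N c 1 i j (z 0) (z 1) * z 2 + entry e f N c 2 i j (z 0) (z 1) * z 3 +
   entry e f N c 3 i j (z 0) (z 1) * z 4 + entry e f N c 4 i j (z 0) (z 1) * z 5"
  unfolding Amat_def four_set by (simp add: add.assoc numeral_eq_Suc)

lemma pfaff_expand:
  "pfaff4 M 1 = M 2 3 * M 4 5 - M 2 4 * M 3 5 + M 2 5 * M 3 4"
  "pfaff4 M 2 = M 1 3 * M 4 5 - M 1 4 * M 3 5 + M 1 5 * M 3 4"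
  "pfaff4 M 3 = M 1 2 * M 4 5 - M 1 4 * M 2 5 + M 1 5 * M 2 4"
  "pfaff4 M 4 = M 1 2 * M 3 5 - M 1 3 * M 2 5 + M 1 5 * M 2 3"
  "pfaff4 M 5 = M 1 2 * M 3 4 - M 1 3 * M 2 4 + M 1 4 * M 2 3"
  unfolding pfaff4_def by (simp_all add: Let_def)

lemma deriv_two:
  assumes "dif g1 x" "dif h1 x" "dif g2 x" "dif h2 x" "g1 x = 0" "h1 x = 0" "g2 x = 0" "h2 x = 0"
  shows "((\<lambda>w. g1 w * h1 w - g2 w * h2 w) has_field_derivative 0) (at x)"
  using DERIV_diff[OF deriv_vanish[OF assms(1,2,5,6)] deriv_vanish[OF assms(3,4,7,8)]] by simp

theorem proposition3p3:
  fixes g :: nat and N :: int and e f :: "nat \<Rightarrow> int"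
    and c :: "nat \<Rightarrow> nat \<Rightarrow> nat \<Rightarrow> nat \<Rightarrow> complex"
    and s0 t0 :: complex
  assumes hN: "N = int g + 4"
    and he_sorted: "\<forall>k. 1 \<le> k \<and> k < 4 \<longrightarrow> e k \<le> e (k + 1)"
    and he_sum: "(\<Sum>k\<in>{1..4}. e k) = N"
    and hf_sorted: "\<forall>i. 1 \<le> i \<and> i < 5 \<longrightarrow> f i \<le> f (i + 1)"
    and hf_sum: "(\<Sum>i\<in>{1..5}. f i) = 2 * N"
    and h15: "dd e f N 1 1 5 < 0"
    and h24: "dd e f N 1 2 4 < 0"
    and h12: "dd e f N 4 1 2 < 0"
    and hA: "alternating_data c"
    and hp: "(s0, t0) \<noteq> (0, 0)"
    and hvan: "entry e f N c 1 2 5 s0 t0 = 0"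
  shows "singular_above e f N c s0 t0"
proof -
  have e12: "e 1 \<le> e 2" and e23: "e 2 \<le> e 3" and e34: "e 3 \<le> e 4"
    using he_sorted[rule_format, of 1] he_sorted[rule_format, of 2] he_sorted[rule_format, of 3] by (simp_all add: eval_nat_numeral)
  have f34: "f 3 \<le> f 4" and f45: "f 4 \<le> f 5"
    using hf_sorted[rule_format, of 3] hf_sorted[rule_format, of 4] by (simp_all add: eval_nat_numeral)
  have d113: "dd e f N 1 1 3 < 0" and d114: "dd e f N 1 1 4 < 0" and d123: "dd e f N 1 2 3 < 0"
    using h15 h24 f34 f45 unfolding dd_def by auto
  have d12: "dd e f N k 1 2 < 0" if "k \<in> {1,2,3,4}" for k
    using h12 e12 e23 e34 that unfolding dd_def by auto
  have M12: "Amat e f N c w 1 2 = 0" for w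
    unfolding Amat_expand using d12 by (simp add: entry_neg)
  define z :: "nat \<Rightarrow> complex" where
    "z = (\<lambda>n. if n = 0 then s0 else if n = 1 then t0 else if n = 2 then 1 else 0)"
  have Mz: "Amat e f N c z i j = entry e f N c 1 i j s0 t0" for i j
    unfolding Amat_expand z_def by simp
  have zeros: "entry e f N c 1 1 j s0 t0 = 0" if "j \<in> {3,4,5}" for j
    using that d113 d114 h15 by (auto simp: entry_neg)
  have zeros2: "entry e f N c 1 2 j s0 t0 = 0" if "j \<in> {3,4,5}" for j
    using that d123 h24 hvan by (auto simp: entry_neg)
  have zs: "entry e f N c 1 1 3 s0 t0 = 0" "entry e f N c 1 1 4 s0 t0 = 0" "entry e f N c 1 1 5 s0 t0 = 0"
    "entry e f N c 1 2 3 s0 t0 = 0" "entry e f N c 1 2 4 s0 t0 = 0" "entry e f N c 1 2 5 s0 t0 = 0"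
    using zeros zeros2 by auto
  have oncurve: "on_curve_over e f N c s0 t0 z"
    unfolding on_curve_over_def
  proof (intro conjI ballI)
    show "z 0 = s0" "z 1 = t0" unfolding z_def by auto
    show "\<exists>k\<in>{1..4}. z (k + 1) \<noteq> 0" by (rule bexI[of _ 1]) (auto simp: z_def)
    fix m :: nat assume "m \<in> {1..5}"
    have "m = 1 \<or> m = 2 \<or> m = 3 \<or> m = 4 \<or> m = 5" using \<open>m \<in> {1..5}\<close> by auto
    moreover have "Pf e f N c 1 z = 0" "Pf e f N c 2 z = 0" "Pf e f N c 3 z = 0" "Pf e f N c 4 z = 0" "Pf e f N c 5 z = 0"
      unfolding Pf_def pfaff_expand Mz M12 zs by simp_all
    ultimately show "Pf e f N c m z = 0" by blast
  qed
  let ?A = "\<lambda>q i j w. Amat e f N c (z(q := w)) i j"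
  have difA: "dif (?A q i j) x" for q i j x by (rule dif_Amat)
  have A0: "?A q i j (z q) = entry e f N c 1 i j s0 t0" for q i j by (simp add: Mz)
  have rowzero: "pderiv_at (Pf e f N c m) q z = 0" if "m \<in> {3,4,5}" for m q
  proof -
    have "m = 3 \<or> m = 4 \<or> m = 5" using that by auto
    then have "((\<lambda>w. Pf e f N c m (z(q := w))) has_field_derivative 0) (at (z q))"
    proof (elim disjE)
      assume m: "m = 3"
      have eq: "(\<lambda>w. Pf e f N c m (z(q := w))) = (\<lambda>w. ?A q 1 5 w * ?A q 2 4 w - ?A q 1 4 w * ?A q 2 5 w)"
        unfolding m Pf_def pfaff_expand M12 by (simp add: fun_eq_iff)
      show ?thesis unfolding eq
        by (rule deriv_two[OF difA difA difA difA]) (simp_all only: fun_upd_triv Mz zs)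
    next
      assume m: "m = 4"
      have eq: "(\<lambda>w. Pf e f N c m (z(q := w))) = (\<lambda>w. ?A q 1 5 w * ?A q 2 3 w - ?A q 1 3 w * ?A q 2 5 w)"
        unfolding m Pf_def pfaff_expand M12 by (simp add: fun_eq_iff)
      show ?thesis unfolding eq
        by (rule deriv_two[OF difA difA difA difA]) (simp_all only: fun_upd_triv Mz zs)
    next
      assume m: "m = 5"
      have eq: "(\<lambda>w. Pf e f N c m (z(q := w))) = (\<lambda>w. ?A q 1 4 w * ?A q 2 3 w - ?A q 1 3 w * ?A q 2 4 w)"
        unfolding m Pf_def pfaff_expand M12 by (simp add: fun_eq_iff)
      show ?thesis unfolding eq
        by (rule deriv_two[OF difA difA difA difA]) (simp_all only: fun_upd_triv Mz zs)
    qed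
    then show ?thesis by (rule pderiv_eq)
  qed
  define J where "J = jacobian e f N c z"
  have J: "J \<in> carrier_mat 5 6" unfolding J_def jacobian_def by simp
  have Jz: "J $$ (i, j) = 0" if "2 \<le> i" "i < 5" "j < 6" for i j
  proof -
    have "i + 1 \<in> {3,4,5}" using that by auto
    then show ?thesis unfolding J_def jacobian_def using that rowzero by simp
  qed
  have "kernel_dim J \<ge> 6 - 2" by (rule kernel_dim_zero_rows[OF J _ Jz]) auto
  then have "tangent_dim e f N c z \<noteq> 1" unfolding tangent_dim_def J_def[symmetric] by simp
  then show ?thesis unfolding singular_above_def using oncurve by blast
qed

end
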